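(* Let $P$ be a finite poset and let $\varphi:P\to P$ satisfy $\varphi\circ\varphi=\mathrm{id}_P$ and $x\le y\iff\varphi(x)\le\varphi(y)$ for all $x,y\in P$. Let $F:=\{x\in P:\varphi(x)=x\}$, regarded as an induced subposet of $P$. If $F$ is a down set of $P$ (i.e., $x\in F$ and $y\le x$ imply $y\in F$), then the parallel union $P+F'$, where $F'$ is a disjoint copy of $F$, is a $\forall$-game; equivalently, $P$ and $F$ are equivalent games, and $g(P)=g(F)$.
   Context: A finite poset $P$ defines a poset game: two players alternate moves; a move consists of choosing a point $x$ of the current poset $Q$ and replacing $Q$ by $Q_x:=\{y\in Q: x\not\le y\}$; the first player unable to move loses. $P$ is an $\exists$-game if the first player has a winning strategy and a $\forall$-game otherwise. The parallel union $P+Q$ of posets is their disjoint union with points of $P$ incomparable to points of $Q$. For finite posets, $P$ and $Q$ are equivalent iff $P+Q$ is a $\forall$-game. The g-number (Grundy number) is defined recursively by $g(P):=\operatorname{mex}\{g(P_x):x\in P\}$, where $\operatorname{mex}A$ is the least natural number not in $A$ (so $g(\emptyset)=0$). *)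

theory Defs
  imports Main
begin

definition poset_on :: "'a set \<Rightarrow> ('a \<Rightarrow> 'a \<Rightarrow> bool) \<Rightarrow> bool" where
  "poset_on P le \<longleftrightarrow>
     (\<forall>x\<in>P. le x x) \<and>
     (\<forall>x\<in>P. \<forall>y\<in>P. le x y \<and> le y x \<longrightarrow> x = y) \<and>
     (\<forall>x\<in>P. \<forall>y\<in>P. \<forall>z\<in>P. le x y \<and> le y z \<longrightarrow> le x z)"

definition move :: "('a \<Rightarrow> 'a \<Rightarrow> bool) \<Rightarrow> 'a set \<Rightarrow> 'a \<Rightarrow> 'a set" where
  "move le Q x = {y\<in>Q. \<not> le x y}"

definition mex :: "nat set \<Rightarrow> nat" where
  "mex A = (LEAST n. n \<notin> A)"

lemma move_psubset:
  assumes "finite Q" "x \<in> Q" "le x x"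
  shows "card (move le Q x) < card Q"
  using assms unfolding move_def by (intro psubset_card_mono) auto

text \<open>Existence of a winning strategy for the first player (an exists-game).
The guard (finiteness, reflexivity) only ensures termination; it holds for finite posets.\<close>
function win :: "('a \<Rightarrow> 'a \<Rightarrow> bool) \<Rightarrow> 'a set \<Rightarrow> bool" where
  "win le Q = (if finite Q \<and> (\<forall>x\<in>Q. le x x)
               then (\<exists>x\<in>Q. \<not> win le (move le Q x)) else False)"
  by auto
termination
  by (relation "measure (\<lambda>(le, Q). card Q)") (auto intro: move_psubset)

definition forall_game :: "('a \<Rightarrow> 'a \<Rightarrow> bool) \<Rightarrow> 'a set \<Rightarrow> bool" where
  "forall_game le Q \<longleftrightarrow> \<not> win le Q"

function grundy :: "('a \<Rightarrow> 'a \<Rightarrow> bool) \<Rightarrow> 'a set \<Rightarrow> nat" where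
  "grundy le Q = (if finite Q \<and> (\<forall>x\<in>Q. le x x)
               then mex ((\<lambda>x. grundy le (move le Q x)) ` Q) else 0)"
  by auto
termination
  by (relation "measure (\<lambda>(le, Q). card Q)") (auto intro: move_psubset)

fun sum_le :: "('a \<Rightarrow> 'a \<Rightarrow> bool) \<Rightarrow> ('b \<Rightarrow> 'b \<Rightarrow> bool) \<Rightarrow> 'a + 'b \<Rightarrow> 'a + 'b \<Rightarrow> bool" where
  "sum_le le1 le2 (Inl a) (Inl b) = le1 a b"
| "sum_le le1 le2 (Inr a) (Inr b) = le2 a b"
| "sum_le le1 le2 _ _ = False"

definition par_union :: "'a set \<Rightarrow> 'b set \<Rightarrow> ('a + 'b) set" where
  "par_union P Q = Inl ` P \<union> Inr ` Q"

end

theory Submission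
  imports Defs
begin

declare win.simps[simp del] grundy.simps[simp del]

lemma mex_notin: "finite A \<Longrightarrow> mex A \<notin> A"
  unfolding mex_def
  by (rule LeastI_ex) (meson ex_new_if_finite infinite_UNIV_nat)

lemma mex_less: "k < mex A \<Longrightarrow> k \<in> A"
  unfolding mex_def using not_less_Least by blast

lemma mex_eqI: "m \<notin> A \<Longrightarrow> (\<forall>k<m. k\<in>A) \<Longrightarrow> mex A = m"
  unfolding mex_def by (rule Least_equality) (auto simp: not_less[symmetric])

lemma mex_Un: "finite A \<Longrightarrow> mex A \<notin> B \<Longrightarrow> mex (A \<union> B) = mex A"
  by (rule mex_eqI) (auto dest: mex_notin mex_less)

lemma move_inl: "move (sum_le le le) (par_union Q R) (Inl x) = par_union (move le Q x) R"
  unfolding move_def par_union_def by auto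

lemma move_inr: "move (sum_le le le) (par_union Q R) (Inr x) = par_union Q (move le R x)"
  unfolding move_def par_union_def by auto

lemma win_intro: "finite T \<Longrightarrow> \<forall>x\<in>T. le' x x \<Longrightarrow> z\<in>T \<Longrightarrow> \<not> win le' (move le' T z) \<Longrightarrow> win le' T"
  by (subst win.simps) (auto simp del: win.simps)

lemma not_win_iff: "finite T \<Longrightarrow> \<forall>x\<in>T. le' x x \<Longrightarrow> (\<not> win le' T) = (\<forall>z\<in>T. win le' (move le' T z))"
  by (subst win.simps) (auto simp del: win.simps)

lemma grundy_eq: "finite Q \<Longrightarrow> \<forall>x\<in>Q. le x x \<Longrightarrow> grundy le Q = mex ((\<lambda>x. grundy le (move le Q x)) ` Q)"
  by (subst grundy.simps) (auto simp del: grundy.simps)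

context
  fixes P :: "'a set" and le :: "'a \<Rightarrow> 'a \<Rightarrow> bool" and \<phi> :: "'a \<Rightarrow> 'a" and F
  assumes fin: "finite P" and po: "poset_on P le"
    and cl: "\<forall>x\<in>P. \<phi> x \<in> P"
    and inv: "\<forall>x\<in>P. \<phi> (\<phi> x) = x"
    and iso: "\<forall>x\<in>P. \<forall>y\<in>P. le x y \<longleftrightarrow> le (\<phi> x) (\<phi> y)"
    and Fdef: "F = {x\<in>P. \<phi> x = x}"
    and down: "\<forall>x\<in>F. \<forall>y\<in>P. le y x \<longrightarrow> y \<in> F"
begin

definition good :: "'a set \<Rightarrow> bool" where
  "good Q \<longleftrightarrow> Q \<subseteq> P \<and> (\<forall>x\<in>Q. \<phi> x \<in> Q)"

lemma refl': "x \<in> P \<Longrightarrow> le x x" using po unfolding poset_on_def by blast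

lemma good_fin: "good Q \<Longrightarrow> finite Q" unfolding good_def using fin finite_subset by blast

lemma goodF: "good Q \<Longrightarrow> move le (Q \<inter> F) x = move le Q x \<inter> F"
  unfolding move_def by auto

lemma good_move_F: "good Q \<Longrightarrow> x \<in> Q \<inter> F \<Longrightarrow> good (move le Q x)"
proof -
  assume g: "good Q" and x: "x \<in> Q \<inter> F"
  have Q: "Q \<subseteq> P" "\<forall>x\<in>Q. \<phi> x \<in> Q" using g good_def by auto
  have "\<phi> y \<in> move le Q x" if y: "y \<in> move le Q x" for y
  proof -
    have y': "y \<in> Q" "\<not> le x y" using y unfolding move_def by auto
    have xy: "x \<in> P" "y \<in> P" "\<phi> x = x" using Q x y' Fdef by auto
    have "\<phi> y \<in> P" using cl xy by auto
    have "\<not> le x (\<phi> y)"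
    proof
      assume h: "le x (\<phi> y)"
      then have "le (\<phi> x) (\<phi> (\<phi> y))" using iso \<open>\<phi> y \<in> P\<close> xy(1) by blast
      then show False using xy inv y' by simp
    qed
    then show ?thesis using y' Q unfolding move_def by auto
  qed
  moreover have "move le Q x \<subseteq> P" using Q unfolding move_def by auto
  ultimately show ?thesis using good_def by auto
qed

lemma card_move: "good Q \<Longrightarrow> x \<in> Q \<Longrightarrow> card (move le Q x) < card Q"
  using move_psubset[of Q x le] good_fin refl' good_def by auto

definition Q2 where "Q2 Q x = move le (move le Q x) (\<phi> x)"

lemma nF_facts:
  assumes g: "good Q" and x: "x \<in> Q" "x \<notin> F"
  shows "\<phi> x \<in> move le Q x" "good (Q2 Q x)" "Q2 Q x \<inter> F = Q \<inter> F"
    "card (Q2 Q x) < card Q"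
proof -
  have xP: "x \<in> P" using g x good_def by auto
  have nfix: "\<phi> x \<noteq> x" using x xP Fdef by auto
  have px: "\<phi> x \<in> P" "\<phi> x \<in> Q" using cl xP g x good_def by auto
  have "\<not> le x (\<phi> x)"
  proof
    assume h: "le x (\<phi> x)"
    then have "le (\<phi> x) x" using iso inv xP px by metis
    then show False using po h xP px nfix unfolding poset_on_def by metis
  qed
  then show m: "\<phi> x \<in> move le Q x" using px unfolding move_def by auto
  have "\<phi> y \<in> Q2 Q x" if yy: "y \<in> Q2 Q x" for y
  proof -
    have y: "y \<in> Q" "\<not> le x y" "\<not> le (\<phi> x) y" using yy unfolding Q2_def move_def by auto
    have yP: "y \<in> P" using y g good_def by auto
    have pyP: "\<phi> y \<in> P" using cl yP by auto
    have a: "\<phi> y \<in> Q" using y g good_def by auto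
    have b: "\<not> le x (\<phi> y)"
    proof
      assume "le x (\<phi> y)"
      then have "le (\<phi> x) (\<phi> (\<phi> y))" using iso xP pyP by blast
      then show False using inv yP y by simp
    qed
    have c: "\<not> le (\<phi> x) (\<phi> y)" using y iso xP yP by blast
    show ?thesis using a b c unfolding Q2_def move_def by auto
  qed
  moreover have "Q2 Q x \<subseteq> P" using g unfolding good_def Q2_def move_def by auto
  ultimately show "good (Q2 Q x)" unfolding good_def by auto
  show "Q2 Q x \<inter> F = Q \<inter> F"
  proof
    show "Q2 Q x \<inter> F \<subseteq> Q \<inter> F" unfolding Q2_def move_def by auto
    show "Q \<inter> F \<subseteq> Q2 Q x \<inter> F"
    proof
      fix y assume y: "y \<in> Q \<inter> F"
      have "\<not> le x y" using down y xP x by blast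
      moreover have "\<not> le (\<phi> x) y"
      proof
        assume "le (\<phi> x) y"
        then have "\<phi> x \<in> F" using down y px by blast
        then have "\<phi> (\<phi> x) = \<phi> x" using Fdef by auto
        then show False using inv xP nfix by auto
      qed
      ultimately show "y \<in> Q2 Q x \<inter> F" using y unfolding Q2_def move_def by auto
    qed
  qed
  have "card (Q2 Q x) \<le> card (move le Q x)" unfolding Q2_def move_def
    using good_fin[OF g] by (intro card_mono) auto
  then show "card (Q2 Q x) < card Q" using card_move[OF g x(1)] by auto
qed

lemma grundy_good: "good Q \<Longrightarrow> grundy le Q = grundy le (Q \<inter> F)"
proof (induction "card Q" arbitrary: Q rule: less_induct)
  case less
  note g = less.prems
  have finQ: "finite Q" using good_fin g .
  have rQ: "\<forall>x\<in>Q. le x x" using g good_def refl' by auto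
  let ?f = "\<lambda>x. grundy le (move le Q x)"
  have split: "?f ` Q = ?f ` (Q \<inter> F) \<union> ?f ` (Q - F)" by auto
  have A: "?f ` (Q \<inter> F) = (\<lambda>x. grundy le (move le (Q \<inter> F) x)) ` (Q \<inter> F)"
  proof (rule image_cong[OF refl])
    fix x assume x: "x \<in> Q \<inter> F"
    show "?f x = grundy le (move le (Q \<inter> F) x)"
      using less.hyps[OF card_move[OF g] good_move_F[OF g x]] x goodF[OF g] by auto
  qed
  have gQF: "grundy le (Q \<inter> F) = mex ((\<lambda>x. grundy le (move le (Q \<inter> F) x)) ` (Q \<inter> F))"
    using finQ rQ by (intro grundy_eq) auto
  have B: "grundy le (Q \<inter> F) \<notin> ?f ` (Q - F)"
  proof
    assume "grundy le (Q \<inter> F) \<in> ?f ` (Q - F)"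
    then obtain x where x: "x \<in> Q" "x \<notin> F" and e: "grundy le (Q \<inter> F) = ?f x" by auto
    note nf = nF_facts[OF g x]
    have e2: "grundy le (Q2 Q x) = grundy le (Q \<inter> F)"
      using less.hyps[OF nf(4) nf(2)] nf(3) by simp
    have fm: "finite (move le Q x)" using finQ unfolding move_def by auto
    have rm: "\<forall>y\<in>move le Q x. le y y" using rQ unfolding move_def by auto
    have "?f x = mex ((\<lambda>y. grundy le (move le (move le Q x) y)) ` move le Q x)"
      using grundy_eq[of "move le Q x" le, OF fm rm] .
    moreover have "grundy le (Q2 Q x) \<in> (\<lambda>y. grundy le (move le (move le Q x) y)) ` move le Q x"
      unfolding Q2_def using nf(1) by auto
    ultimately show False using e e2 mex_notin[of "(\<lambda>y. grundy le (move le (move le Q x) y)) ` move le Q x"] fm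
      by (metis finite_imageI)
  qed
  have M: "mex (?f ` (Q \<inter> F)) = grundy le (Q \<inter> F)" using A gQF by simp
  have fA: "finite (?f ` (Q \<inter> F))" using finQ by simp
  have B': "mex (?f ` (Q \<inter> F)) \<notin> ?f ` (Q - F)" using B M by simp
  have "grundy le Q = mex (?f ` Q)" using grundy_eq[of Q le, OF finQ rQ] .
  also have "\<dots> = mex (?f ` (Q \<inter> F) \<union> ?f ` (Q - F))" by (subst split) (rule refl)
  also have "\<dots> = mex (?f ` (Q \<inter> F))" by (rule mex_Un[OF fA B'])
  also have "\<dots> = grundy le (Q \<inter> F)" by (rule M)
  finally show ?case .
qed

lemma pu_fin: "Q \<subseteq> P \<Longrightarrow> R \<subseteq> P \<Longrightarrow> finite (par_union Q R)"
  unfolding par_union_def using fin finite_subset by blast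

lemma pu_refl: "Q \<subseteq> P \<Longrightarrow> R \<subseteq> P \<Longrightarrow> \<forall>x\<in>par_union Q R. sum_le le le x x"
  unfolding par_union_def using refl' by auto

lemma win_good: "good Q \<Longrightarrow> \<not> win (sum_le le le) (par_union Q (Q \<inter> F))"
proof (induction "card Q" arbitrary: Q rule: less_induct)
  case less
  note g = less.prems
  have FP: "F \<subseteq> P" using Fdef by auto
  have QP: "Q \<subseteq> P" using g good_def by auto
  have QFP: "Q \<inter> F \<subseteq> P" using FP by auto
  have S1: "finite (par_union Q (Q \<inter> F))" using pu_fin[OF QP QFP] .
  have S2: "\<forall>x\<in>par_union Q (Q \<inter> F). sum_le le le x x" using pu_refl[OF QP QFP] .
  have "\<forall>z\<in>par_union Q (Q \<inter> F). win (sum_le le le) (move (sum_le le le) (par_union Q (Q \<inter> F)) z)"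
  proof (intro ballI)
    fix z assume z: "z \<in> par_union Q (Q \<inter> F)"
    show "win (sum_le le le) (move (sum_le le le) (par_union Q (Q \<inter> F)) z)"
    proof (cases z)
      case (Inl x)
      then have x: "x \<in> Q" using z unfolding par_union_def by auto
      show ?thesis
      proof (cases "x \<in> F")
        case True
        have gm: "good (move le Q x)" using good_move_F[OF g] x True by auto
        have gmP: "move le Q x \<subseteq> P" using gm good_def by auto
        have mP: "move le Q x \<subseteq> P" using gm good_def by auto
        show ?thesis unfolding Inl move_inl
        proof (rule win_intro[where z="Inr x"])
          show "finite (par_union (move le Q x) (Q \<inter> F))" using pu_fin[OF gmP QFP] .
          show "\<forall>x\<in>par_union (move le Q x) (Q \<inter> F). sum_le le le x x" using pu_refl[OF gmP QFP] .
          show "Inr x \<in> par_union (move le Q x) (Q \<inter> F)" using x True unfolding par_union_def by auto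
          show "\<not> win (sum_le le le) (move (sum_le le le) (par_union (move le Q x) (Q \<inter> F)) (Inr x))"
            unfolding move_inr goodF[OF g, symmetric]
            using less.hyps[OF card_move[OF g x] gm] goodF[OF g] by auto
        qed
      next
        case False
        note nf = nF_facts[OF g x False]
        have gmP: "move le Q x \<subseteq> P" using QP unfolding move_def by auto
        show ?thesis unfolding Inl move_inl
        proof (rule win_intro[where z="Inl (\<phi> x)"])
          show "finite (par_union (move le Q x) (Q \<inter> F))" using pu_fin[OF gmP QFP] .
          show "\<forall>x\<in>par_union (move le Q x) (Q \<inter> F). sum_le le le x x" using pu_refl[OF gmP QFP] .
          show "Inl (\<phi> x) \<in> par_union (move le Q x) (Q \<inter> F)" using nf(1) unfolding par_union_def by auto
          show "\<not> win (sum_le le le) (move (sum_le le le) (par_union (move le Q x) (Q \<inter> F)) (Inl (\<phi> x)))"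
            unfolding move_inl using less.hyps[OF nf(4) nf(2)] nf(3) unfolding Q2_def by auto
        qed
      qed
    next
      case (Inr x)
      then have x: "x \<in> Q" "x \<in> F" using z unfolding par_union_def by auto
      have gm: "good (move le Q x)" using good_move_F[OF g] x by auto
      have mP: "move le (Q \<inter> F) x \<subseteq> P" using FP unfolding move_def by auto
      show ?thesis unfolding Inr move_inr
      proof (rule win_intro[where z="Inl x"])
        show "finite (par_union Q (move le (Q \<inter> F) x))" using pu_fin[OF QP mP] .
        show "\<forall>x\<in>par_union Q (move le (Q \<inter> F) x). sum_le le le x x" using pu_refl[OF QP mP] .
        show "Inl x \<in> par_union Q (move le (Q \<inter> F) x)" using x unfolding par_union_def by auto
        show "\<not> win (sum_le le le) (move (sum_le le le) (par_union Q (move le (Q \<inter> F) x)) (Inl x))"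
          unfolding move_inl goodF[OF g]
          using less.hyps[OF card_move[OF g x(1)] gm] by auto
      qed
    qed
  qed
  then show ?case using not_win_iff[of "par_union Q (Q \<inter> F)" "sum_le le le", OF S1 S2] by simp
qed

lemma main_aux: "forall_game (sum_le le le) (par_union P F) \<and> grundy le P = grundy le F"
proof -
  have gP: "good P" unfolding good_def using cl by auto
  have "P \<inter> F = F" using Fdef by auto
  then show ?thesis using win_good[OF gP] grundy_good[OF gP] unfolding forall_game_def by auto
qed

end

theorem mainTheorem3:
  fixes P :: "'a set" and le :: "'a \<Rightarrow> 'a \<Rightarrow> bool" and \<phi> :: "'a \<Rightarrow> 'a"
  assumes "finite P" and "poset_on P le"
    and "\<forall>x\<in>P. \<phi> x \<in> P"
    and "\<forall>x\<in>P. \<phi> (\<phi> x) = x"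
    and "\<forall>x\<in>P. \<forall>y\<in>P. le x y \<longleftrightarrow> le (\<phi> x) (\<phi> y)"
    and "F = {x\<in>P. \<phi> x = x}"
    and "\<forall>x\<in>F. \<forall>y\<in>P. le y x \<longrightarrow> y \<in> F"
  shows "forall_game (sum_le le le) (par_union P F) \<and> grundy le P = grundy le F"
  using main_aux[OF assms] .

end
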